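(* Let $\mathcal{X}$ (contexts), $\mathcal{A}$ (actions) and $\mathcal{Y}\subseteq\mathbb{R}$ (outcomes) be spaces, let $p(x)$ be a context density and $p(y\mid x,a)$ an outcome density. For a behaviour policy $\pi^b(a\mid x)$ and a target policy $\pi^*(a\mid x)$ define the joint densities $p_{\pi^b}(x,a,y)=p(y\mid x,a)\,\pi^b(a\mid x)\,p(x)$ and $p_{\pi^*}(x,a,y)=p(y\mid x,a)\,\pi^*(a\mid x)\,p(x)$, with $Y$-marginals $p_{\pi^b}(y)$ and $p_{\pi^*}(y)$. Assume $\pi^*(a\mid x)>0\Rightarrow \pi^b(a\mid x)>0$ for all $x,a$. Let $w(y)=p_{\pi^*}(y)/p_{\pi^b}(y)$ and $\rho(a,x)=\pi^*(a\mid x)/\pi^b(a\mid x)$. Then $w(y)=\mathbb{E}_{\pi^b}[\rho(A,X)\mid Y=y]$, and $$w=\arg\min_f \mathbb{E}_{\pi^b}\big[(\rho(A,X)-f(Y))^2\big].$$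
   Context: $\mathbb{E}_{\pi^b}$ denotes expectation with $(X,A,Y)\sim p_{\pi^b}(x,a,y)$. The minimum is over measurable functions $f:\mathcal{Y}\to\mathbb{R}$. *)

theory Defs
  imports "HOL-Probability.Probability"
begin

definition joint_meas ::
  "'x measure \<Rightarrow> 'a measure \<Rightarrow> real measure \<Rightarrow> ('x \<Rightarrow> real) \<Rightarrow>
   ('x \<Rightarrow> 'a \<Rightarrow> real \<Rightarrow> real) \<Rightarrow> ('x \<Rightarrow> 'a \<Rightarrow> real) \<Rightarrow> ('x \<times> 'a \<times> real) measure" where
  "joint_meas MX MA MY p py pol =
     density (MX \<Otimes>\<^sub>M (MA \<Otimes>\<^sub>M MY)) (\<lambda>(x, a, y). ennreal (py x a y * pol x a * p x))"

definition y_marg ::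
  "'x measure \<Rightarrow> 'a measure \<Rightarrow> ('x \<Rightarrow> real) \<Rightarrow>
   ('x \<Rightarrow> 'a \<Rightarrow> real \<Rightarrow> real) \<Rightarrow> ('x \<Rightarrow> 'a \<Rightarrow> real) \<Rightarrow> real \<Rightarrow> real" where
  "y_marg MX MA p py pol y =
     enn2real (\<integral>\<^sup>+ xa. ennreal (py (fst xa) (snd xa) y * pol (fst xa) (snd xa) * p (fst xa)) \<partial>(MX \<Otimes>\<^sub>M MA))"

end

theory Submission
  imports Defs
begin


lemma tonelli3:
  fixes h :: "'x \<times> 'a \<times> 'y \<Rightarrow> ennreal"
  assumes sfX: "sigma_finite_measure MX" and sfA: "sigma_finite_measure MA"
    and sfY: "sigma_finite_measure MY"
    and hm[measurable]: "h \<in> borel_measurable (MX \<Otimes>\<^sub>M (MA \<Otimes>\<^sub>M MY))"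
  shows "integral\<^sup>N (MX \<Otimes>\<^sub>M (MA \<Otimes>\<^sub>M MY)) h = (\<integral>\<^sup>+y. \<integral>\<^sup>+xa. h (fst xa, snd xa, y) \<partial>(MX \<Otimes>\<^sub>M MA) \<partial>MY)"
proof -
  interpret AY: pair_sigma_finite MA MY using sfA sfY by (simp add: pair_sigma_finite_def)
  interpret XY: pair_sigma_finite MX MY using sfX sfY by (simp add: pair_sigma_finite_def)
  interpret XA: pair_sigma_finite MX MA using sfX sfA by (simp add: pair_sigma_finite_def)


  have "integral\<^sup>N (MX \<Otimes>\<^sub>M (MA \<Otimes>\<^sub>M MY)) h = (\<integral>\<^sup>+x. \<integral>\<^sup>+ay. h (x, ay) \<partial>(MA \<Otimes>\<^sub>M MY) \<partial>MX)"
    by (rule AY.P.nn_integral_fst[symmetric]) simp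
  also have "\<dots> = (\<integral>\<^sup>+x. \<integral>\<^sup>+a. \<integral>\<^sup>+y. h (x, a, y) \<partial>MY \<partial>MA \<partial>MX)"
    by (intro nn_integral_cong AY.M2.nn_integral_fst[symmetric]) measurable
  also have "\<dots> = (\<integral>\<^sup>+x. \<integral>\<^sup>+y. \<integral>\<^sup>+a. h (x, a, y) \<partial>MA \<partial>MY \<partial>MX)"
    by (intro nn_integral_cong AY.Fubini'[symmetric]) measurable
  also have "\<dots> = (\<integral>\<^sup>+y. \<integral>\<^sup>+x. \<integral>\<^sup>+a. h (x, a, y) \<partial>MA \<partial>MX \<partial>MY)"
    by (intro XY.Fubini'[symmetric]) measurable
  also have "\<dots> = (\<integral>\<^sup>+y. \<integral>\<^sup>+xa. h (fst xa, snd xa, y) \<partial>(MX \<Otimes>\<^sub>M MA) \<partial>MY)"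
  proof (intro nn_integral_cong)
    fix y assume "y \<in> space MY"
    have m: "(\<lambda>xa. h (fst xa, snd xa, y)) \<in> borel_measurable (MX \<Otimes>\<^sub>M MA)"
      using \<open>y \<in> space MY\<close> by measurable
    show "(\<integral>\<^sup>+x. \<integral>\<^sup>+a. h (x, a, y) \<partial>MA \<partial>MX) = (\<integral>\<^sup>+xa. h (fst xa, snd xa, y) \<partial>(MX \<Otimes>\<^sub>M MA))"
      using AY.M1.nn_integral_fst[OF m] by simp
  qed
  finally show ?thesis .
qed


lemma sq_decomp:
  fixes r :: "'b \<Rightarrow> real"
  assumes fin: "finite_measure N" and ir[measurable]: "integrable N r"
    and cm: "c * measure N (space N) = integral\<^sup>L N r"
  shows "(\<integral>\<^sup>+z. ennreal ((r z - d)\<^sup>2) \<partial>N)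
       = (\<integral>\<^sup>+z. ennreal ((r z - c)\<^sup>2) \<partial>N) + ennreal ((c - d)\<^sup>2 * measure N (space N))"
proof -
  interpret finite_measure N by (rule fin)
  have rm[measurable]: "r \<in> borel_measurable N" using ir by auto
  have id: "(r z - d)\<^sup>2 = (r z - c)\<^sup>2 + (2 * (c - d) * r z - 2 * (c - d) * c) + (c - d)\<^sup>2" for z
    by (simp add: power2_eq_square algebra_simps)
  show ?thesis
  proof (cases "integrable N (\<lambda>z. (r z - c)\<^sup>2)")
    case True
    have i2: "integrable N (\<lambda>z. 2 * (c - d) * r z - 2 * (c - d) * c)"
      using ir by auto
    have i3: "integrable N (\<lambda>z. (r z - d)\<^sup>2)"
      unfolding id using True i2 by auto
    have "(\<integral>z. (r z - d)\<^sup>2 \<partial>N) = (\<integral>z. (r z - c)\<^sup>2 \<partial>N) + (\<integral>z. 2 * (c - d) * r z - 2 * (c - d) * c \<partial>N) + (c - d)\<^sup>2 * measure N (space N)"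
      unfolding id
      using True i2 Bochner_Integration.integral_add[OF Bochner_Integration.integrable_add[OF True i2], of "\<lambda>_. (c - d)\<^sup>2"]
        Bochner_Integration.integral_add[OF True i2] by simp
    also have "(\<integral>z. 2 * (c - d) * r z - 2 * (c - d) * c \<partial>N) = 0"
    proof -
      have "(\<integral>z. 2 * (c - d) * r z - 2 * (c - d) * c \<partial>N) = (\<integral>z. 2 * (c - d) * r z \<partial>N) - (\<integral>z. 2 * (c - d) * c \<partial>N)"
        using ir by (intro Bochner_Integration.integral_diff) auto
      also have "\<dots> = 2 * (c - d) * (integral\<^sup>L N r - c * measure N (space N))"
      proof -
        have "(\<integral>z. 2 * (c - d) * r z \<partial>N) = 2 * (c - d) * integral\<^sup>L N r"
          by (rule integral_mult_right_zero)
        moreover have "(\<integral>z. 2 * (c - d) * c \<partial>N) = measure N (space N) * (2 * (c - d) * c)"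
          by (simp only: lebesgue_integral_const real_scaleR_def)
        ultimately show ?thesis by (simp add: right_diff_distrib mult.commute mult.left_commute)
      qed
      finally show ?thesis using cm by simp
    qed
    finally have eq: "(\<integral>z. (r z - d)\<^sup>2 \<partial>N) = (\<integral>z. (r z - c)\<^sup>2 \<partial>N) + (c - d)\<^sup>2 * measure N (space N)"
      by simp
    have n1: "0 \<le> (\<integral>z. (r z - c)\<^sup>2 \<partial>N)" by (rule integral_nonneg_AE) simp
    have n2: "0 \<le> (c - d)\<^sup>2 * measure N (space N)" by simp
    have "(\<integral>\<^sup>+z. ennreal ((r z - d)\<^sup>2) \<partial>N) = ennreal (\<integral>z. (r z - d)\<^sup>2 \<partial>N)"
      by (rule nn_integral_eq_integral[OF i3]) simp
    also have "\<dots> = ennreal (\<integral>z. (r z - c)\<^sup>2 \<partial>N) + ennreal ((c - d)\<^sup>2 * measure N (space N))"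
      unfolding eq by (rule ennreal_plus[OF n1 n2])
    also have "ennreal (\<integral>z. (r z - c)\<^sup>2 \<partial>N) = (\<integral>\<^sup>+z. ennreal ((r z - c)\<^sup>2) \<partial>N)"
      by (rule nn_integral_eq_integral[OF True, symmetric]) simp
    finally show ?thesis .
  next
    case False
    have fin_int: "integrable N (\<lambda>z. (r z - e)\<^sup>2)" if "(\<integral>\<^sup>+z. ennreal ((r z - e)\<^sup>2) \<partial>N) \<noteq> \<infinity>" for e
    proof (rule integrableI_nonneg)
      show "(\<lambda>z. (r z - e)\<^sup>2) \<in> borel_measurable N" by measurable
      show "AE x in N. 0 \<le> (r x - e)\<^sup>2" by (rule AE_I2) (rule zero_le_power2)
      show "(\<integral>\<^sup>+z. ennreal ((r z - e)\<^sup>2) \<partial>N) < \<infinity>" using that by (simp add: top.not_eq_extremum)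
    qed
    have inf1: "(\<integral>\<^sup>+z. ennreal ((r z - c)\<^sup>2) \<partial>N) = \<infinity>"
      using False fin_int[of c] by blast
    have inf2: "(\<integral>\<^sup>+z. ennreal ((r z - d)\<^sup>2) \<partial>N) = \<infinity>"
    proof (rule ccontr)
      assume "(\<integral>\<^sup>+z. ennreal ((r z - d)\<^sup>2) \<partial>N) \<noteq> \<infinity>"
      then have i4: "integrable N (\<lambda>z. (r z - d)\<^sup>2)" by (rule fin_int)
      have i5: "integrable N (\<lambda>z. 2 * (r z - d)\<^sup>2 + 2 * (c - d)\<^sup>2)"
        by (intro Bochner_Integration.integrable_add integrable_mult_right i4 integrable_const)
      have bnd: "(r z - c)\<^sup>2 \<le> 2 * (r z - d)\<^sup>2 + 2 * (c - d)\<^sup>2" for z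
      proof -
        have "2 * (r z - d)\<^sup>2 + 2 * (c - d)\<^sup>2 - (r z - c)\<^sup>2 = (r z - d + (c - d))\<^sup>2"
          by (simp add: power2_eq_square) algebra
        moreover have "0 \<le> (r z - d + (c - d))\<^sup>2" by (rule zero_le_power2)
        ultimately show ?thesis by linarith
      qed
      have "integrable N (\<lambda>z. (r z - c)\<^sup>2)"
      proof (rule Bochner_Integration.integrable_bound[OF i5])
        show "(\<lambda>z. (r z - c)\<^sup>2) \<in> borel_measurable N" by measurable
        show "AE x in N. norm ((r x - c)\<^sup>2) \<le> norm (2 * (r x - d)\<^sup>2 + 2 * (c - d)\<^sup>2)"
        proof (rule AE_I2)
          fix x
          have "0 \<le> (r x - c)\<^sup>2" by (rule zero_le_power2)
          moreover have "0 \<le> 2 * (r x - d)\<^sup>2 + 2 * (c - d)\<^sup>2" by simp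
          ultimately show "norm ((r x - c)\<^sup>2) \<le> norm (2 * (r x - d)\<^sup>2 + 2 * (c - d)\<^sup>2)"
            using bnd[of x] by (simp only: real_norm_def abs_of_nonneg)
        qed
      qed
      then show False using False by blast
    qed
    show ?thesis using inf1 inf2 by simp
  qed
qed


lemma tonelli3_iter:
  fixes h :: "'x \<times> 'a \<times> 'y \<Rightarrow> ennreal"
  assumes sfX: "sigma_finite_measure MX" and sfA: "sigma_finite_measure MA"
    and sfY: "sigma_finite_measure MY"
    and hm[measurable]: "h \<in> borel_measurable (MX \<Otimes>\<^sub>M (MA \<Otimes>\<^sub>M MY))"
  shows "integral\<^sup>N (MX \<Otimes>\<^sub>M (MA \<Otimes>\<^sub>M MY)) h = (\<integral>\<^sup>+x. \<integral>\<^sup>+a. \<integral>\<^sup>+y. h (x, a, y) \<partial>MY \<partial>MA \<partial>MX)"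
proof -
  interpret AY: pair_sigma_finite MA MY using sfA sfY by (simp add: pair_sigma_finite_def)
  have "integral\<^sup>N (MX \<Otimes>\<^sub>M (MA \<Otimes>\<^sub>M MY)) h = (\<integral>\<^sup>+x. \<integral>\<^sup>+ay. h (x, ay) \<partial>(MA \<Otimes>\<^sub>M MY) \<partial>MX)"
    by (rule AY.P.nn_integral_fst[symmetric]) simp
  also have "\<dots> = (\<integral>\<^sup>+x. \<integral>\<^sup>+a. \<integral>\<^sup>+y. h (x, a, y) \<partial>MY \<partial>MA \<partial>MX)"
    by (intro nn_integral_cong AY.M2.nn_integral_fst[symmetric]) measurable
  finally show ?thesis .
qed

lemma total_one:
  fixes MX :: "'x measure" and MA :: "'a measure" and MY :: "real measure"
    and p :: "'x \<Rightarrow> real" and py :: "'x \<Rightarrow> 'a \<Rightarrow> real \<Rightarrow> real"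
    and pol :: "'x \<Rightarrow> 'a \<Rightarrow> real"
  assumes sfX: "sigma_finite_measure MX" and sfA: "sigma_finite_measure MA"
    and sfY: "sigma_finite_measure MY"
    and p_nonneg: "\<forall>x\<in>space MX. 0 \<le> p x"
    and p_norm: "(\<integral>\<^sup>+ x. ennreal (p x) \<partial>MX) = 1"
    and py_meas: "(\<lambda>\<omega>. py (fst \<omega>) (fst (snd \<omega>)) (snd (snd \<omega>))) \<in> borel_measurable (MX \<Otimes>\<^sub>M (MA \<Otimes>\<^sub>M MY))"
    and hm: "(\<lambda>\<omega>. ennreal (py (fst \<omega>) (fst (snd \<omega>)) (snd (snd \<omega>)) * pol (fst \<omega>) (fst (snd \<omega>)) * p (fst \<omega>)))
              \<in> borel_measurable (MX \<Otimes>\<^sub>M (MA \<Otimes>\<^sub>M MY))"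
    and py_norm: "\<forall>x\<in>space MX. \<forall>a\<in>space MA. (\<integral>\<^sup>+ y. ennreal (py x a y) \<partial>MY) = 1"
    and pol_meas: "(\<lambda>(x, a). pol x a) \<in> borel_measurable (MX \<Otimes>\<^sub>M MA)"
    and pol_nonneg: "\<forall>x\<in>space MX. \<forall>a\<in>space MA. 0 \<le> pol x a"
    and pol_norm: "\<forall>x\<in>space MX. (\<integral>\<^sup>+ a. ennreal (pol x a) \<partial>MA) = 1"
  shows "integral\<^sup>N (MX \<Otimes>\<^sub>M (MA \<Otimes>\<^sub>M MY))
     (\<lambda>\<omega>. ennreal (py (fst \<omega>) (fst (snd \<omega>)) (snd (snd \<omega>)) * pol (fst \<omega>) (fst (snd \<omega>)) * p (fst \<omega>))) = 1"
proof -
  have "integral\<^sup>N (MX \<Otimes>\<^sub>M (MA \<Otimes>\<^sub>M MY))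
     (\<lambda>\<omega>. ennreal (py (fst \<omega>) (fst (snd \<omega>)) (snd (snd \<omega>)) * pol (fst \<omega>) (fst (snd \<omega>)) * p (fst \<omega>)))
    = (\<integral>\<^sup>+x. \<integral>\<^sup>+a. \<integral>\<^sup>+y. ennreal (py x a y * pol x a * p x) \<partial>MY \<partial>MA \<partial>MX)"
    using tonelli3_iter[OF sfX sfA sfY hm] by simp
  also have "\<dots> = (\<integral>\<^sup>+x. \<integral>\<^sup>+a. ennreal (pol x a) * ennreal (p x) \<partial>MA \<partial>MX)"
  proof (intro nn_integral_cong)
    fix x a assume x: "x \<in> space MX" and a: "a \<in> space MA"
    have m: "(\<lambda>y. ennreal (py x a y)) \<in> borel_measurable MY"
      using measurable_compose[OF measurable_Pair[OF measurable_const[OF x] measurable_Pair[OF measurable_const[OF a] measurable_ident]] py_meas]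
      by (simp add: measurable_ident_sets[OF refl])
    have "(\<integral>\<^sup>+y. ennreal (py x a y * pol x a * p x) \<partial>MY) = (\<integral>\<^sup>+y. ennreal (py x a y) * ennreal (pol x a * p x) \<partial>MY)"
      using x a pol_nonneg p_nonneg by (intro nn_integral_cong) (simp add: ennreal_mult'' mult.assoc)
    also have "\<dots> = (\<integral>\<^sup>+y. ennreal (py x a y) \<partial>MY) * ennreal (pol x a * p x)"
      by (rule nn_integral_multc[OF m])
    also have "\<dots> = ennreal (pol x a) * ennreal (p x)"
      using x a pol_nonneg p_nonneg py_norm by (simp add: ennreal_mult)
    finally show "(\<integral>\<^sup>+y. ennreal (py x a y * pol x a * p x) \<partial>MY) = ennreal (pol x a) * ennreal (p x)" .
  qed
  also have "\<dots> = (\<integral>\<^sup>+x. ennreal (p x) \<partial>MX)"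
  proof (intro nn_integral_cong)
    fix x assume x: "x \<in> space MX"
    have "(\<integral>\<^sup>+a. ennreal (pol x a) * ennreal (p x) \<partial>MA) = (\<integral>\<^sup>+a. ennreal (pol x a) \<partial>MA) * ennreal (p x)"
    proof (rule nn_integral_multc)
      have [measurable]: "(\<lambda>a. pol x a) \<in> borel_measurable MA"
        using measurable_compose[OF measurable_Pair[OF measurable_const[OF x] measurable_ident_sets[OF refl]] pol_meas]
        by simp
      show "(\<lambda>a. ennreal (pol x a)) \<in> borel_measurable MA" by measurable
    qed
    then show "(\<integral>\<^sup>+a. ennreal (pol x a) * ennreal (p x) \<partial>MA) = ennreal (p x)"
      using x pol_norm by simp
  qed
  also have "\<dots> = 1" by (rule p_norm)
  finally show ?thesis .
qed
theorem lemma2p1: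
  fixes MX :: "'x measure" and MA :: "'a measure" and MY :: "real measure"
    and p :: "'x \<Rightarrow> real" and py :: "'x \<Rightarrow> 'a \<Rightarrow> real \<Rightarrow> real"
    and pib pis :: "'x \<Rightarrow> 'a \<Rightarrow> real"
  assumes sfX: "sigma_finite_measure MX" and sfA: "sigma_finite_measure MA"
    and sfY: "sigma_finite_measure MY" and setsY: "sets MY = sets borel"
    and p_meas: "p \<in> borel_measurable MX"
    and p_nonneg: "\<forall>x\<in>space MX. 0 \<le> p x"
    and p_norm: "(\<integral>\<^sup>+ x. ennreal (p x) \<partial>MX) = 1"
    and py_meas: "(\<lambda>(x, a, y). py x a y) \<in> borel_measurable (MX \<Otimes>\<^sub>M (MA \<Otimes>\<^sub>M MY))"
    and py_nonneg: "\<forall>x\<in>space MX. \<forall>a\<in>space MA. \<forall>y\<in>space MY. 0 \<le> py x a y"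
    and py_norm: "\<forall>x\<in>space MX. \<forall>a\<in>space MA. (\<integral>\<^sup>+ y. ennreal (py x a y) \<partial>MY) = 1"
    and pib_meas: "(\<lambda>(x, a). pib x a) \<in> borel_measurable (MX \<Otimes>\<^sub>M MA)"
    and pib_nonneg: "\<forall>x\<in>space MX. \<forall>a\<in>space MA. 0 \<le> pib x a"
    and pib_norm: "\<forall>x\<in>space MX. (\<integral>\<^sup>+ a. ennreal (pib x a) \<partial>MA) = 1"
    and pis_meas: "(\<lambda>(x, a). pis x a) \<in> borel_measurable (MX \<Otimes>\<^sub>M MA)"
    and pis_nonneg: "\<forall>x\<in>space MX. \<forall>a\<in>space MA. 0 \<le> pis x a"
    and pis_norm: "\<forall>x\<in>space MX. (\<integral>\<^sup>+ a. ennreal (pis x a) \<partial>MA) = 1"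
    and abs_cont: "\<forall>x\<in>space MX. \<forall>a\<in>space MA. pis x a > 0 \<longrightarrow> pib x a > 0"
  defines "Pb \<equiv> joint_meas MX MA MY p py pib"
    and "w \<equiv> (\<lambda>y. y_marg MX MA p py pis y / y_marg MX MA p py pib y)"
    and "rho \<equiv> (\<lambda>a x. pis x a / pib x a)"
  shows "(AE \<omega> in Pb. w (snd (snd \<omega>)) =
            real_cond_exp Pb (vimage_algebra (space Pb) (\<lambda>\<omega>. snd (snd \<omega>)) MY)
              (\<lambda>\<omega>. rho (fst (snd \<omega>)) (fst \<omega>)) \<omega>)
       \<and> (\<forall>f \<in> borel_measurable MY.
            (\<integral>\<^sup>+ \<omega>. ennreal ((rho (fst (snd \<omega>)) (fst \<omega>) - w (snd (snd \<omega>)))\<^sup>2) \<partial>Pb)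
            \<le> (\<integral>\<^sup>+ \<omega>. ennreal ((rho (fst (snd \<omega>)) (fst \<omega>) - f (snd (snd \<omega>)))\<^sup>2) \<partial>Pb))
       \<and> (\<forall>f \<in> borel_measurable MY.
            (\<integral>\<^sup>+ \<omega>. ennreal ((rho (fst (snd \<omega>)) (fst \<omega>) - f (snd (snd \<omega>)))\<^sup>2) \<partial>Pb)
              = (\<integral>\<^sup>+ \<omega>. ennreal ((rho (fst (snd \<omega>)) (fst \<omega>) - w (snd (snd \<omega>)))\<^sup>2) \<partial>Pb)
            \<and> (\<integral>\<^sup>+ \<omega>. ennreal ((rho (fst (snd \<omega>)) (fst \<omega>) - w (snd (snd \<omega>)))\<^sup>2) \<partial>Pb) < \<infinity>
            \<longrightarrow> (AE \<omega> in Pb. f (snd (snd \<omega>)) = w (snd (snd \<omega>))))"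
proof -
  let ?S = "MX \<Otimes>\<^sub>M MA"
  let ?B = "MX \<Otimes>\<^sub>M (MA \<Otimes>\<^sub>M MY)"
  interpret XA: pair_sigma_finite MX MA using sfX sfA by (simp add: pair_sigma_finite_def)
  interpret AY: pair_sigma_finite MA MY using sfA sfY by (simp add: pair_sigma_finite_def)
  define P3 where "P3 = (\<lambda>\<omega>::'x\<times>'a\<times>real. py (fst \<omega>) (fst (snd \<omega>)) (snd (snd \<omega>)))"
  define PB where "PB = (\<lambda>xa::'x\<times>'a. pib (fst xa) (snd xa))"
  define PS where "PS = (\<lambda>xa::'x\<times>'a. pis (fst xa) (snd xa))"
  have "P3 = (\<lambda>(x, a, y). py x a y)" unfolding P3_def by (auto simp: fun_eq_iff)
  then have P3m[measurable]: "P3 \<in> borel_measurable ?B" using py_meas by simp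
  have "PB = (\<lambda>(x, a). pib x a)" unfolding PB_def by (auto simp: fun_eq_iff)
  then have PBm[measurable]: "PB \<in> borel_measurable ?S" using pib_meas by simp
  have "PS = (\<lambda>(x, a). pis x a)" unfolding PS_def by (auto simp: fun_eq_iff)
  then have PSm[measurable]: "PS \<in> borel_measurable ?S" using pis_meas by simp
  note p_meas[measurable]
  define qb where "qb = (\<lambda>xa y. P3 (fst xa, snd xa, y) * PB xa * p (fst xa))"
  define qs where "qs = (\<lambda>xa y. P3 (fst xa, snd xa, y) * PS xa * p (fst xa))"
  define Eb where "Eb = (\<lambda>y. \<integral>\<^sup>+xa. ennreal (qb xa y) \<partial>?S)"
  define Es where "Es = (\<lambda>y. \<integral>\<^sup>+xa. ennreal (qs xa y) \<partial>?S)"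
  define rh where "rh = (\<lambda>xa. PS xa / PB xa)"
  have rho_eq: "rho a x = rh (x, a)" for a x by (simp add: rho_def rh_def PS_def PB_def)
  have w_eq: "w y = enn2real (Es y) / enn2real (Eb y)" for y
    by (simp add: w_def y_marg_def Eb_def Es_def qb_def qs_def P3_def PB_def PS_def)
  have qbm[measurable]: "(\<lambda>\<omega>. qb (fst \<omega>, fst (snd \<omega>)) (snd (snd \<omega>))) \<in> borel_measurable ?B"
    unfolding qb_def by measurable
  have Pb_eq: "Pb = density ?B (\<lambda>\<omega>. ennreal (qb (fst \<omega>, fst (snd \<omega>)) (snd (snd \<omega>))))"
    unfolding Pb_def joint_meas_def qb_def P3_def PB_def
    by (intro arg_cong[where f="density _"] ext) (auto simp: split_beta)
  have qbm2[measurable]: "(\<lambda>(y, xa). qb xa y) \<in> borel_measurable (MY \<Otimes>\<^sub>M ?S)"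
    unfolding qb_def by measurable
  have qsm2[measurable]: "(\<lambda>(y, xa). qs xa y) \<in> borel_measurable (MY \<Otimes>\<^sub>M ?S)"
    unfolding qs_def by measurable
  have Ebm[measurable]: "Eb \<in> borel_measurable MY"
    unfolding Eb_def by measurable
  have Esm[measurable]: "Es \<in> borel_measurable MY"
    unfolding Es_def by measurable
  have wm[measurable]: "w \<in> borel_measurable MY"
    unfolding w_eq[abs_def] by measurable
  have rhm[measurable]: "rh \<in> borel_measurable ?S"
    unfolding rh_def by measurable
  have K1: "integral\<^sup>N Pb g = (\<integral>\<^sup>+y. \<integral>\<^sup>+xa. ennreal (qb xa y) * g (fst xa, snd xa, y) \<partial>?S \<partial>MY)"
    if gm[measurable]: "g \<in> borel_measurable ?B" for g
  proof -
    have "integral\<^sup>N Pb g = (\<integral>\<^sup>+\<omega>. ennreal (qb (fst \<omega>, fst (snd \<omega>)) (snd (snd \<omega>))) * g \<omega> \<partial>?B)"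
      unfolding Pb_eq by (rule nn_integral_density) measurable
    also have "\<dots> = (\<integral>\<^sup>+y. \<integral>\<^sup>+xa. ennreal (qb xa y) * g (fst xa, snd xa, y) \<partial>?S \<partial>MY)"
    proof -
      have hm: "(\<lambda>\<omega>. ennreal (qb (fst \<omega>, fst (snd \<omega>)) (snd (snd \<omega>))) * g \<omega>) \<in> borel_measurable ?B"
        by measurable
      show ?thesis using tonelli3[OF sfX sfA sfY hm] by simp
    qed
    finally show ?thesis .
  qed
  have K2: "ennreal (qb (x, a) y) * ennreal (rh (x, a)) = ennreal (qs (x, a) y)"
    if xs: "x \<in> space MX" "a \<in> space MA" "y \<in> space MY" for x a y
  proof (cases "pib x a > 0")
    case True
    have n1: "0 \<le> py x a y * pib x a * p x" using xs py_nonneg pib_nonneg p_nonneg by simp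
    have n2: "0 \<le> pis x a / pib x a" using xs pis_nonneg pib_nonneg by simp
    have "ennreal (py x a y * pib x a * p x) * ennreal (pis x a / pib x a) = ennreal (py x a y * pib x a * p x * (pis x a / pib x a))"
      using ennreal_mult[OF n1 n2] by simp
    also have "py x a y * pib x a * p x * (pis x a / pib x a) = py x a y * pis x a * p x"
      using True by (simp add: field_simps)
    finally show ?thesis by (simp add: qb_def qs_def rh_def P3_def PB_def PS_def)
  next
    case False
    have "0 \<le> pib x a" using xs pib_nonneg by simp
    then have "pib x a = 0" using False by linarith
    moreover have "0 \<le> pis x a" using xs pis_nonneg by simp
    moreover have "\<not> pis x a > 0" using False xs abs_cont by blast
    ultimately have "pib x a = 0" "pis x a = 0" by linarith+
    then show ?thesis by (simp add: qb_def qs_def rh_def P3_def PB_def PS_def)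
  qed
  have py_meas': "(\<lambda>\<omega>. py (fst \<omega>) (fst (snd \<omega>)) (snd (snd \<omega>))) \<in> borel_measurable ?B"
    using P3m by (simp add: P3_def)
  have K3b: "(\<integral>\<^sup>+y. Eb y \<partial>MY) = 1"
  proof -
    have "(\<integral>\<^sup>+y. Eb y \<partial>MY) = (\<integral>\<^sup>+\<omega>. ennreal (qb (fst \<omega>, fst (snd \<omega>)) (snd (snd \<omega>))) \<partial>?B)"
    proof -
      have hm: "(\<lambda>\<omega>. ennreal (qb (fst \<omega>, fst (snd \<omega>)) (snd (snd \<omega>)))) \<in> borel_measurable ?B"
        by measurable
      show ?thesis using tonelli3[OF sfX sfA sfY hm] unfolding Eb_def by simp
    qed
    also have "\<dots> = 1"
    proof -
      have hm0: "(\<lambda>\<omega>. ennreal (qb (fst \<omega>, fst (snd \<omega>)) (snd (snd \<omega>)))) \<in> borel_measurable ?B"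
        by measurable
      have hm2: "(\<lambda>\<omega>. ennreal (py (fst \<omega>) (fst (snd \<omega>)) (snd (snd \<omega>)) * pib (fst \<omega>) (fst (snd \<omega>)) * p (fst \<omega>))) \<in> borel_measurable ?B"
        using hm0 by (simp add: qb_def P3_def PB_def)
      show ?thesis
        using total_one[OF sfX sfA sfY p_nonneg p_norm py_meas' hm2 py_norm pib_meas pib_nonneg pib_norm]
        by (simp add: qb_def P3_def PB_def)
    qed
    finally show ?thesis .
  qed
  have qsm[measurable]: "(\<lambda>\<omega>. qs (fst \<omega>, fst (snd \<omega>)) (snd (snd \<omega>))) \<in> borel_measurable ?B"
    unfolding qs_def by measurable
  have K3s: "(\<integral>\<^sup>+y. Es y \<partial>MY) = 1"
  proof -
    have "(\<integral>\<^sup>+y. Es y \<partial>MY) = (\<integral>\<^sup>+\<omega>. ennreal (qs (fst \<omega>, fst (snd \<omega>)) (snd (snd \<omega>))) \<partial>?B)"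
    proof -
      have hm: "(\<lambda>\<omega>. ennreal (qs (fst \<omega>, fst (snd \<omega>)) (snd (snd \<omega>)))) \<in> borel_measurable ?B"
        by measurable
      show ?thesis using tonelli3[OF sfX sfA sfY hm] unfolding Es_def by simp
    qed
    also have "\<dots> = 1"
    proof -
      have hm0: "(\<lambda>\<omega>. ennreal (qs (fst \<omega>, fst (snd \<omega>)) (snd (snd \<omega>)))) \<in> borel_measurable ?B"
        by measurable
      have hm2: "(\<lambda>\<omega>. ennreal (py (fst \<omega>) (fst (snd \<omega>)) (snd (snd \<omega>)) * pis (fst \<omega>) (fst (snd \<omega>)) * p (fst \<omega>))) \<in> borel_measurable ?B"
        using hm0 by (simp add: qs_def P3_def PS_def)
      show ?thesis
        using total_one[OF sfX sfA sfY p_nonneg p_norm py_meas' hm2 py_norm pis_meas pis_nonneg pis_norm]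
        by (simp add: qs_def P3_def PS_def)
    qed
    finally show ?thesis .
  qed
  have K4b: "AE y in MY. Eb y \<noteq> \<infinity>"
    using nn_integral_PInf_AE[OF Ebm] K3b by simp
  have K4s: "AE y in MY. Es y \<noteq> \<infinity>"
    using nn_integral_PInf_AE[OF Esm] K3s by simp
  have K5: "Es y = (\<integral>\<^sup>+xa. ennreal (qb xa y) * ennreal (rh xa) \<partial>?S)" if "y \<in> space MY" for y
    unfolding Es_def
    by (intro nn_integral_cong) (use K2 that in \<open>auto simp: space_pair_measure\<close>)
  have K5b: "Es y = 0" if y: "y \<in> space MY" and e0: "Eb y = 0" for y
  proof -
    have m1: "(\<lambda>xa. ennreal (qb xa y)) \<in> borel_measurable ?S" using y unfolding qb_def by measurable
    have m2: "(\<lambda>xa. ennreal (qb xa y) * ennreal (rh xa)) \<in> borel_measurable ?S" using y unfolding qb_def by measurable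
    have "AE xa in ?S. ennreal (qb xa y) = 0"
      using e0 nn_integral_0_iff_AE[OF m1] by (simp add: Eb_def)
    then have "AE xa in ?S. ennreal (qb xa y) * ennreal (rh xa) = 0"
      by eventually_elim simp
    then show ?thesis using K5[OF y] nn_integral_0_iff_AE[OF m2] by simp
  qed
  have K6: "w y * enn2real (Eb y) = enn2real (Es y)" if y: "y \<in> space MY" "Eb y \<noteq> \<infinity>" "Es y \<noteq> \<infinity>" for y
  proof (cases "Eb y = 0")
    case True
    then show ?thesis using K5b[OF y(1)] by (simp add: w_eq)
  next
    case False
    then have "enn2real (Eb y) \<noteq> 0" using y(2) by (simp add: enn2real_eq_0_iff)
    then show ?thesis by (simp add: w_eq)
  qed
  have w_nonneg: "0 \<le> w y" for y by (simp add: w_eq)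
  have K6': "ennreal (w y) * Eb y = Es y" if y: "y \<in> space MY" "Eb y \<noteq> \<infinity>" "Es y \<noteq> \<infinity>" for y
  proof -
    have "ennreal (w y) * Eb y = ennreal (w y) * ennreal (enn2real (Eb y))" using y(2) by (simp add: ennreal_enn2real_if)
    also have "\<dots> = ennreal (w y * enn2real (Eb y))" using w_nonneg by (simp add: ennreal_mult)
    also have "\<dots> = Es y" using K6[OF y] y(3) by (simp add: ennreal_enn2real_if)
    finally show ?thesis .
  qed
  have spaceY: "space MY = UNIV" using sets_eq_imp_space_eq[OF setsY] by simp
  define R where "R = (\<lambda>\<omega>::'x\<times>'a\<times>real. rho (fst (snd \<omega>)) (fst \<omega>))"
  have R_eq2: "R = (\<lambda>\<omega>. rh (fst \<omega>, fst (snd \<omega>)))" by (auto simp: R_def rho_eq fun_eq_iff)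
  have Rm[measurable]: "R \<in> borel_measurable ?B" unfolding R_eq2 by measurable
  have rh_nonneg: "0 \<le> rh xa" if "xa \<in> space ?S" for xa
    using that pis_nonneg pib_nonneg by (auto simp: rh_def PS_def PB_def space_pair_measure)
  have R_nonneg: "0 \<le> R \<omega>" if "\<omega> \<in> space ?B" for \<omega>
    using that rh_nonneg by (auto simp: R_eq2 space_pair_measure)
  have spPb: "space Pb = space ?B" by (simp add: Pb_eq)
  have setsPb: "sets Pb = sets ?B" by (simp add: Pb_eq)
  have Ym[measurable]: "(\<lambda>\<omega>. snd (snd \<omega>)) \<in> measurable ?B MY" by measurable
  have K8R: "(\<integral>\<^sup>+\<omega>. indicator B (snd (snd \<omega>)) * ennreal (R \<omega>) \<partial>Pb) = (\<integral>\<^sup>+y. indicator B y * Es y \<partial>MY)"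
    if B[measurable]: "B \<in> sets MY" for B
  proof -
    have "(\<integral>\<^sup>+\<omega>. indicator B (snd (snd \<omega>)) * ennreal (R \<omega>) \<partial>Pb)
       = (\<integral>\<^sup>+y. \<integral>\<^sup>+xa. ennreal (qb xa y) * (indicator B y * ennreal (rh xa)) \<partial>?S \<partial>MY)"
      by (subst K1) (measurable, simp add: R_eq2)
    also have "\<dots> = (\<integral>\<^sup>+y. indicator B y * Es y \<partial>MY)"
    proof (intro nn_integral_cong)
      fix y assume y: "y \<in> space MY"
      have m: "(\<lambda>xa. ennreal (qb xa y) * ennreal (rh xa)) \<in> borel_measurable ?S"
        using y unfolding qb_def by measurable
      have "(\<integral>\<^sup>+xa. ennreal (qb xa y) * (indicator B y * ennreal (rh xa)) \<partial>?S)
          = (\<integral>\<^sup>+xa. indicator B y * (ennreal (qb xa y) * ennreal (rh xa)) \<partial>?S)"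
        by (simp add: ac_simps)
      also have "\<dots> = indicator B y * (\<integral>\<^sup>+xa. ennreal (qb xa y) * ennreal (rh xa) \<partial>?S)"
        by (rule nn_integral_cmult[OF m])
      finally show "(\<integral>\<^sup>+xa. ennreal (qb xa y) * (indicator B y * ennreal (rh xa)) \<partial>?S) = indicator B y * Es y"
        using K5[OF y] by simp
    qed
    finally show ?thesis .
  qed
  have K8W: "(\<integral>\<^sup>+\<omega>. indicator B (snd (snd \<omega>)) * ennreal (w (snd (snd \<omega>))) \<partial>Pb) = (\<integral>\<^sup>+y. indicator B y * Es y \<partial>MY)"
    if B[measurable]: "B \<in> sets MY" for B
  proof -
    have "(\<integral>\<^sup>+\<omega>. indicator B (snd (snd \<omega>)) * ennreal (w (snd (snd \<omega>))) \<partial>Pb)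
       = (\<integral>\<^sup>+y. \<integral>\<^sup>+xa. ennreal (qb xa y) * (indicator B y * ennreal (w y)) \<partial>?S \<partial>MY)"
    proof -
      have gm: "(\<lambda>\<omega>. indicator B (snd (snd \<omega>)) * ennreal (w (snd (snd \<omega>)))) \<in> borel_measurable ?B"
        by measurable
      show ?thesis using K1[OF gm] by simp
    qed
    also have "\<dots> = (\<integral>\<^sup>+y. indicator B y * (ennreal (w y) * Eb y) \<partial>MY)"
    proof (intro nn_integral_cong)
      fix y assume y: "y \<in> space MY"
      have m: "(\<lambda>xa. ennreal (qb xa y)) \<in> borel_measurable ?S"
        using y unfolding qb_def by measurable
      show "(\<integral>\<^sup>+xa. ennreal (qb xa y) * (indicator B y * ennreal (w y)) \<partial>?S) = indicator B y * (ennreal (w y) * Eb y)"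
        unfolding Eb_def by (subst nn_integral_multc[OF m]) (simp add: ac_simps)
    qed
    also have "\<dots> = (\<integral>\<^sup>+y. indicator B y * Es y \<partial>MY)"
    proof (intro nn_integral_cong_AE)
      show "AE y in MY. indicator B y * (ennreal (w y) * Eb y) = indicator B y * Es y"
        using K4b K4s AE_space by eventually_elim (simp add: K6')
    qed
    finally show ?thesis .
  qed
  have SI: "(\<integral>x\<in>(\<lambda>\<omega>. snd (snd \<omega>)) -` B \<inter> space Pb. f x \<partial>Pb)
      = enn2real (\<integral>\<^sup>+\<omega>. indicator B (snd (snd \<omega>)) * ennreal (f \<omega>) \<partial>Pb)"
    if B[measurable]: "B \<in> sets MY" and fm[measurable]: "f \<in> borel_measurable ?B"
      and fnn: "\<And>\<omega>. \<omega> \<in> space ?B \<Longrightarrow> 0 \<le> f \<omega>" for B f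
  proof -
    have "(\<integral>x\<in>(\<lambda>\<omega>. snd (snd \<omega>)) -` B \<inter> space Pb. f x \<partial>Pb)
        = (\<integral>x. indicator B (snd (snd x)) * f x \<partial>Pb)"
      unfolding set_lebesgue_integral_def
      by (intro Bochner_Integration.integral_cong) (auto simp: indicator_def)
    also have "\<dots> = enn2real (\<integral>\<^sup>+x. ennreal (indicator B (snd (snd x)) * f x) \<partial>Pb)"
      by (rule integral_eq_nn_integral) (use fnn in \<open>auto simp: Pb_eq intro!: AE_I2\<close>)
    also have "(\<integral>\<^sup>+x. ennreal (indicator B (snd (snd x)) * f x) \<partial>Pb) = (\<integral>\<^sup>+\<omega>. indicator B (snd (snd \<omega>)) * ennreal (f \<omega>) \<partial>Pb)"
      by (intro nn_integral_cong) (auto simp: indicator_def)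
    finally show ?thesis .
  qed
  have emPb: "emeasure Pb (space Pb) = 1"
  proof -
    have "emeasure Pb (space Pb) = (\<integral>\<^sup>+\<omega>. 1 \<partial>Pb)" by simp
    also have "\<dots> = (\<integral>\<^sup>+y. \<integral>\<^sup>+xa. ennreal (qb xa y) * 1 \<partial>?S \<partial>MY)"
      by (rule K1) simp
    also have "\<dots> = 1" using K3b by (simp add: Eb_def)
    finally show ?thesis .
  qed
  interpret Pbp: prob_space Pb by (rule prob_spaceI) (rule emPb)
  define F where "F = vimage_algebra (space Pb) (\<lambda>\<omega>. snd (snd \<omega>)) MY"
  have Yf: "(\<lambda>\<omega>. snd (snd \<omega>)) \<in> space Pb \<rightarrow> space MY"
    using measurable_space[OF Ym] spPb by auto
  have subF: "subalgebra Pb F"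
    unfolding subalgebra_def
  proof
    show "space F = space Pb" by (simp add: F_def)
    show "sets F \<subseteq> sets Pb"
    proof
      fix A assume "A \<in> sets F"
      then obtain B where B: "B \<in> sets MY" and A: "A = (\<lambda>\<omega>. snd (snd \<omega>)) -` B \<inter> space Pb"
        unfolding F_def sets_vimage_algebra2[OF Yf] by blast
      show "A \<in> sets Pb" unfolding A spPb setsPb using B by measurable
    qed
  qed
  interpret FS: finite_measure_subalgebra Pb F by unfold_locales (rule subF)
  have intR: "integrable Pb R"
  proof (rule integrableI_nonneg)
    show "R \<in> borel_measurable Pb" by (simp add: Pb_eq)
    show "AE x in Pb. 0 \<le> R x" using R_nonneg by (intro AE_I2) (simp add: spPb)
    have "(\<integral>\<^sup>+x. ennreal (R x) \<partial>Pb) = (\<integral>\<^sup>+x. indicator UNIV (snd (snd x)) * ennreal (R x) \<partial>Pb)" by simp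
    also have "\<dots> = 1" using K8R[of UNIV] K3s by (simp add: setsY)
    finally show "(\<integral>\<^sup>+x. ennreal (R x) \<partial>Pb) < \<infinity>" by simp
  qed
  have intW: "integrable Pb (\<lambda>\<omega>. w (snd (snd \<omega>)))"
  proof (rule integrableI_nonneg)
    show "(\<lambda>\<omega>. w (snd (snd \<omega>))) \<in> borel_measurable Pb" by (simp add: Pb_eq)
    show "AE x in Pb. 0 \<le> w (snd (snd x))" using w_nonneg by simp
    have "(\<integral>\<^sup>+x. ennreal (w (snd (snd x))) \<partial>Pb) = (\<integral>\<^sup>+x. indicator UNIV (snd (snd x)) * ennreal (w (snd (snd x))) \<partial>Pb)" by simp
    also have "\<dots> = 1" using K8W[of UNIV] K3s by (simp add: setsY)
    finally show "(\<integral>\<^sup>+x. ennreal (w (snd (snd x))) \<partial>Pb) < \<infinity>" by simp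
  qed
  have WmF: "(\<lambda>\<omega>. w (snd (snd \<omega>))) \<in> borel_measurable F"
    unfolding F_def using measurable_compose[OF measurable_vimage_algebra1[OF Yf] wm] by simp
  have charact: "AE \<omega> in Pb. real_cond_exp Pb F R \<omega> = w (snd (snd \<omega>))"
  proof (rule FS.real_cond_exp_charact[OF _ intR intW WmF])
    fix A assume "A \<in> sets F"
    then obtain B where B: "B \<in> sets MY" and A: "A = (\<lambda>\<omega>. snd (snd \<omega>)) -` B \<inter> space Pb"
      unfolding F_def sets_vimage_algebra2[OF Yf] by blast
    have "(\<integral>x\<in>A. R x \<partial>Pb) = enn2real (\<integral>\<^sup>+\<omega>. indicator B (snd (snd \<omega>)) * ennreal (R \<omega>) \<partial>Pb)"
      unfolding A by (rule SI[OF B Rm R_nonneg])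
    also have "\<dots> = enn2real (\<integral>\<^sup>+\<omega>. indicator B (snd (snd \<omega>)) * ennreal (w (snd (snd \<omega>))) \<partial>Pb)"
      using K8R[OF B] K8W[OF B] by simp
    also have "\<dots> = (\<integral>x\<in>A. w (snd (snd x)) \<partial>Pb)"
      unfolding A by (rule SI[OF B, symmetric]) (measurable, simp add: w_nonneg)
    finally show "(\<integral>x\<in>A. R x \<partial>Pb) = (\<integral>x\<in>A. w (snd (snd x)) \<partial>Pb)" .
  qed
  have part1: "AE \<omega> in Pb. w (snd (snd \<omega>)) =
            real_cond_exp Pb (vimage_algebra (space Pb) (\<lambda>\<omega>. snd (snd \<omega>)) MY)
              (\<lambda>\<omega>. rho (fst (snd \<omega>)) (fst \<omega>)) \<omega>"
    using charact unfolding F_def R_def by (auto elim: eventually_mono)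
  define inner where "inner = (\<lambda>d y. \<integral>\<^sup>+xa. ennreal (qb xa y) * ennreal ((rh xa - d)\<^sup>2) \<partial>?S)"
  have KI: "(\<integral>\<^sup>+ \<omega>. ennreal ((rho (fst (snd \<omega>)) (fst \<omega>) - f (snd (snd \<omega>)))\<^sup>2) \<partial>Pb) = (\<integral>\<^sup>+y. inner (f y) y \<partial>MY)"
    if fm[measurable]: "f \<in> borel_measurable MY" for f
  proof -
    have gm: "(\<lambda>\<omega>. ennreal ((rho (fst (snd \<omega>)) (fst \<omega>) - f (snd (snd \<omega>)))\<^sup>2)) \<in> borel_measurable ?B"
      using Rm unfolding R_def by measurable
    show ?thesis using K1[OF gm] by (simp add: inner_def rho_eq)
  qed
  have innm: "(\<lambda>y. inner (f y) y) \<in> borel_measurable MY" if fm[measurable]: "f \<in> borel_measurable MY" for f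
    unfolding inner_def qb_def by measurable
  have K7: "AE y in MY. \<forall>d. inner d y = inner (w y) y + ennreal ((w y - d)\<^sup>2 * enn2real (Eb y))"
    using K4b K4s AE_space
  proof eventually_elim
    case (elim y)
    then have y: "y \<in> space MY" and fb: "Eb y \<noteq> \<infinity>" and fs: "Es y \<noteq> \<infinity>" by auto
    define N where "N = density ?S (\<lambda>xa. ennreal (qb xa y))"
    have qm[measurable]: "(\<lambda>xa. ennreal (qb xa y)) \<in> borel_measurable ?S"
      using y unfolding qb_def by measurable
    have inN: "inner d y = (\<integral>\<^sup>+xa. ennreal ((rh xa - d)\<^sup>2) \<partial>N)" for d
      proof -
      have t1: "(\<lambda>xa. ennreal ((rh xa - d)\<^sup>2)) \<in> borel_measurable ?S" by measurable
      show ?thesis unfolding N_def inner_def by (subst nn_integral_density[OF qm t1]) simp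
    qed
    have emN: "emeasure N (space N) = Eb y"
    proof -
      have "emeasure N (space N) = emeasure N (space ?S)" by (simp add: N_def)
      also have "\<dots> = (\<integral>\<^sup>+xa. ennreal (qb xa y) * indicator (space ?S) xa \<partial>?S)"
        unfolding N_def by (rule emeasure_density[OF qm sets.top])
      also have "\<dots> = Eb y" unfolding Eb_def
        by (intro nn_integral_cong) (simp only: indicator_simps mult_1_right)
      finally show ?thesis .
    qed
    have finN: "finite_measure N" using emN fb by (intro finite_measureI) simp
    have meN: "measure N (space N) = enn2real (Eb y)" using emN by (simp add: measure_def)
    have rhN[measurable]: "rh \<in> borel_measurable N" by (simp add: N_def)
    have nnrhN: "(\<integral>\<^sup>+xa. ennreal (rh xa) \<partial>N) = Es y"
      proof -
      have t1: "(\<lambda>xa. ennreal (rh xa)) \<in> borel_measurable ?S" by measurable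
      show ?thesis unfolding N_def K5[OF y] by (subst nn_integral_density[OF qm t1]) simp
    qed
    have AEnn: "AE xa in N. 0 \<le> rh xa" using rh_nonneg by (intro AE_I2) (simp add: N_def)
    have intN: "integrable N rh"
      by (rule integrableI_nonneg[OF rhN AEnn]) (use nnrhN fs in \<open>simp add: top.not_eq_extremum\<close>)
    have lintN: "integral\<^sup>L N rh = enn2real (Es y)"
      using integral_eq_nn_integral[OF rhN AEnn] nnrhN by simp
    have cm: "w y * measure N (space N) = integral\<^sup>L N rh"
      unfolding meN lintN by (rule K6[OF y fb fs])
    show ?case
    proof
      fix d
      show "inner d y = inner (w y) y + ennreal ((w y - d)\<^sup>2 * enn2real (Eb y))"
        unfolding inN meN[symmetric] by (rule sq_decomp[OF finN intN cm])
    qed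
  qed
  have part2: "\<forall>f \<in> borel_measurable MY.
            (\<integral>\<^sup>+ \<omega>. ennreal ((rho (fst (snd \<omega>)) (fst \<omega>) - w (snd (snd \<omega>)))\<^sup>2) \<partial>Pb)
            \<le> (\<integral>\<^sup>+ \<omega>. ennreal ((rho (fst (snd \<omega>)) (fst \<omega>) - f (snd (snd \<omega>)))\<^sup>2) \<partial>Pb)"
  proof
    fix f :: "real \<Rightarrow> real" assume fm: "f \<in> borel_measurable MY"
    show "(\<integral>\<^sup>+ \<omega>. ennreal ((rho (fst (snd \<omega>)) (fst \<omega>) - w (snd (snd \<omega>)))\<^sup>2) \<partial>Pb)
            \<le> (\<integral>\<^sup>+ \<omega>. ennreal ((rho (fst (snd \<omega>)) (fst \<omega>) - f (snd (snd \<omega>)))\<^sup>2) \<partial>Pb)"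
      unfolding KI[OF wm] KI[OF fm]
    proof (rule nn_integral_mono_AE)
      show "AE y in MY. inner (w y) y \<le> inner (f y) y"
        using K7
      proof eventually_elim
        case (elim y)
        then have "inner (f y) y = inner (w y) y + ennreal ((w y - f y)\<^sup>2 * enn2real (Eb y))" by blast
        then show ?case by (metis add_increasing2 order_refl zero_le)
      qed
    qed
  qed
  have part3: "\<forall>f \<in> borel_measurable MY.
            (\<integral>\<^sup>+ \<omega>. ennreal ((rho (fst (snd \<omega>)) (fst \<omega>) - f (snd (snd \<omega>)))\<^sup>2) \<partial>Pb)
              = (\<integral>\<^sup>+ \<omega>. ennreal ((rho (fst (snd \<omega>)) (fst \<omega>) - w (snd (snd \<omega>)))\<^sup>2) \<partial>Pb)
            \<and> (\<integral>\<^sup>+ \<omega>. ennreal ((rho (fst (snd \<omega>)) (fst \<omega>) - w (snd (snd \<omega>)))\<^sup>2) \<partial>Pb) < \<infinity>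
            \<longrightarrow> (AE \<omega> in Pb. f (snd (snd \<omega>)) = w (snd (snd \<omega>)))"
  proof (intro ballI impI)
    fix f :: "real \<Rightarrow> real" assume fm[measurable]: "f \<in> borel_measurable MY"
    assume H: "(\<integral>\<^sup>+ \<omega>. ennreal ((rho (fst (snd \<omega>)) (fst \<omega>) - f (snd (snd \<omega>)))\<^sup>2) \<partial>Pb)
              = (\<integral>\<^sup>+ \<omega>. ennreal ((rho (fst (snd \<omega>)) (fst \<omega>) - w (snd (snd \<omega>)))\<^sup>2) \<partial>Pb)
            \<and> (\<integral>\<^sup>+ \<omega>. ennreal ((rho (fst (snd \<omega>)) (fst \<omega>) - w (snd (snd \<omega>)))\<^sup>2) \<partial>Pb) < \<infinity>"
    then have H1: "(\<integral>\<^sup>+y. inner (f y) y \<partial>MY) = (\<integral>\<^sup>+y. inner (w y) y \<partial>MY)"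
      and H2: "(\<integral>\<^sup>+y. inner (w y) y \<partial>MY) < \<infinity>"
      unfolding KI[OF wm] KI[OF fm] by auto
    have Zm: "(\<lambda>y. ennreal ((w y - f y)\<^sup>2 * enn2real (Eb y))) \<in> borel_measurable MY" by measurable
    have "(\<integral>\<^sup>+y. inner (f y) y \<partial>MY) = (\<integral>\<^sup>+y. inner (w y) y + ennreal ((w y - f y)\<^sup>2 * enn2real (Eb y)) \<partial>MY)"
    proof (rule nn_integral_cong_AE)
      show "AE y in MY. inner (f y) y = inner (w y) y + ennreal ((w y - f y)\<^sup>2 * enn2real (Eb y))"
        using K7 by eventually_elim blast
    qed
    also have "\<dots> = (\<integral>\<^sup>+y. inner (w y) y \<partial>MY) + (\<integral>\<^sup>+y. ennreal ((w y - f y)\<^sup>2 * enn2real (Eb y)) \<partial>MY)"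
      by (rule nn_integral_add[OF innm[OF wm] Zm])
    finally have "(\<integral>\<^sup>+y. ennreal ((w y - f y)\<^sup>2 * enn2real (Eb y)) \<partial>MY) = 0"
      using H1 H2 by (auto simp: top.not_eq_extremum)
    then have "AE y in MY. ennreal ((w y - f y)\<^sup>2 * enn2real (Eb y)) = 0"
      using nn_integral_0_iff_AE[OF Zm] by simp
    then have AEy: "AE y in MY. (f y \<noteq> w y) \<longrightarrow> Eb y = 0"
      using K4b
    proof eventually_elim
      case (elim y)
      have "0 \<le> (w y - f y)\<^sup>2 * enn2real (Eb y)" by simp
      then have "(w y - f y)\<^sup>2 * enn2real (Eb y) = 0" using elim(1) by simp
      then show ?case using elim(2) by (auto simp: enn2real_eq_0_iff)
    qed
    have setm: "{\<omega> \<in> space Pb. f (snd (snd \<omega>)) = w (snd (snd \<omega>))} \<in> sets Pb"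
      unfolding spPb setsPb by measurable
    have indeq: "indicator {\<omega>. \<not> f (snd (snd \<omega>)) = w (snd (snd \<omega>))} = (\<lambda>\<omega>. indicator {y. f y \<noteq> w y} (snd (snd \<omega>)) :: ennreal)"
      by (auto simp: indicator_def fun_eq_iff)
    have Sm[measurable]: "{y. f y \<noteq> w y} \<in> sets MY"
    proof -
      have "{y \<in> space MY. f y \<noteq> w y} \<in> sets MY" by measurable
      then show ?thesis by (simp add: spaceY)
    qed
    have gm: "(\<lambda>\<omega>. indicator {y. f y \<noteq> w y} (snd (snd \<omega>)) :: ennreal) \<in> borel_measurable ?B"
      by measurable
    have "integral\<^sup>N Pb (indicator {\<omega>. \<not> f (snd (snd \<omega>)) = w (snd (snd \<omega>))})
        = (\<integral>\<^sup>+y. \<integral>\<^sup>+xa. ennreal (qb xa y) * indicator {y. f y \<noteq> w y} y \<partial>?S \<partial>MY)"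
      unfolding indeq using K1[OF gm] by simp
    also have "\<dots> = (\<integral>\<^sup>+y. Eb y * indicator {y. f y \<noteq> w y} y \<partial>MY)"
    proof (intro nn_integral_cong)
      fix y assume y: "y \<in> space MY"
      have m: "(\<lambda>xa. ennreal (qb xa y)) \<in> borel_measurable ?S"
        using y unfolding qb_def by measurable
      show "(\<integral>\<^sup>+xa. ennreal (qb xa y) * indicator {y. f y \<noteq> w y} y \<partial>?S) = Eb y * indicator {y. f y \<noteq> w y} y"
        unfolding Eb_def by (rule nn_integral_multc[OF m])
    qed
    also have "\<dots> = (\<integral>\<^sup>+y. 0 \<partial>MY)"
    proof (rule nn_integral_cong_AE)
      show "AE y in MY. Eb y * indicator {y. f y \<noteq> w y} y = 0"
        using AEy by eventually_elim (auto simp: indicator_def)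
    qed
    finally have "integral\<^sup>N Pb (indicator {\<omega>. \<not> f (snd (snd \<omega>)) = w (snd (snd \<omega>))}) = 0" by simp
    then show "AE \<omega> in Pb. f (snd (snd \<omega>)) = w (snd (snd \<omega>))"
      using AE_iff_nn_integral[OF setm] by simp
  qed
  show ?thesis using part1 part2 part3 by blast
qed

end
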